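(* Fix $f\in S_1\oplus S_2$ with $f\ne0$. Then $\dim\big(\pi_{1,2}P_\xi(S_3)+[f]\big)=4$ for almost every $\xi\in\mathbb{R}^2$.
   Context: For $j\ge0$, $S_j$ is the real vector space of homogeneous polynomials of degree $j$ in $r,s$; $[\cdot]$ denotes linear span. For $\xi=(a,b)\in\mathbb{R}^2$ and a polynomial $f$, $P_\xi f(r,s)=f(\xi)+\partial_rf(\xi)(r-a)+\partial_sf(\xi)(s-b)+\frac12\partial_{rr}f(\xi)(r-a)^2+\partial_{rs}f(\xi)(r-a)(s-b)+\frac12\partial_{ss}f(\xi)(s-b)^2$ (second-order Taylor polynomial at $\xi$), an element of $S_0\oplus S_1\oplus S_2$. $\pi_{1,2}$ is the projection of $S_0\oplus S_1\oplus S_2$ onto $S_1\oplus S_2$ along $S_0$. *)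

theory Defs
  imports "HOL-Analysis.Analysis"
begin

text \<open>
  S_3 (homogeneous cubics in r,s) is represented by coefficient vectors c :: real^4,
  c = (c1,c2,c3,c4) standing for c1 r^3 + c2 r^2 s + c3 r s^2 + c4 s^3.
  S_1 + S_2 is represented by coefficient vectors q :: real^5 with respect to the
  monomial basis r, s, r^2, r s, s^2 (S_0 is the constant term).
\<close>

definition eval12 :: "real ^ 5 \<Rightarrow> real \<times> real \<Rightarrow> real" where
  "eval12 q x = q$1 * fst x + q$2 * snd x + q$3 * (fst x)^2 + q$4 * (fst x * snd x) + q$5 * (snd x)^2"

definition cubic :: "real ^ 4 \<Rightarrow> real \<times> real \<Rightarrow> real" where
  "cubic c x = c$1 * (fst x)^3 + c$2 * (fst x)^2 * snd x + c$3 * fst x * (snd x)^2 + c$4 * (snd x)^3"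

definition d_r :: "real ^ 4 \<Rightarrow> real \<times> real \<Rightarrow> real" where
  "d_r c x = 3 * c$1 * (fst x)^2 + 2 * c$2 * fst x * snd x + c$3 * (snd x)^2"
definition d_s :: "real ^ 4 \<Rightarrow> real \<times> real \<Rightarrow> real" where
  "d_s c x = c$2 * (fst x)^2 + 2 * c$3 * fst x * snd x + 3 * c$4 * (snd x)^2"
definition d_rr :: "real ^ 4 \<Rightarrow> real \<times> real \<Rightarrow> real" where
  "d_rr c x = 6 * c$1 * fst x + 2 * c$2 * snd x"
definition d_rs :: "real ^ 4 \<Rightarrow> real \<times> real \<Rightarrow> real" where
  "d_rs c x = 2 * c$2 * fst x + 2 * c$3 * snd x"
definition d_ss :: "real ^ 4 \<Rightarrow> real \<times> real \<Rightarrow> real" where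
  "d_ss c x = 2 * c$3 * fst x + 6 * c$4 * snd x"

definition taylor2 :: "real \<times> real \<Rightarrow> real ^ 4 \<Rightarrow> real \<times> real \<Rightarrow> real" where
  "taylor2 \<xi> c y = (let a = fst \<xi>; b = snd \<xi>; r = fst y; s = snd y in
      cubic c \<xi> + d_r c \<xi> * (r - a) + d_s c \<xi> * (s - b)
      + d_rr c \<xi> / 2 * (r - a)^2 + d_rs c \<xi> * (r - a) * (s - b) + d_ss c \<xi> / 2 * (s - b)^2)"

definition taylor_const :: "real \<times> real \<Rightarrow> real ^ 4 \<Rightarrow> real" where
  "taylor_const \<xi> c = (let a = fst \<xi>; b = snd \<xi> in
      cubic c \<xi> - d_r c \<xi> * a - d_s c \<xi> * b + d_rr c \<xi> / 2 * a^2 + d_rs c \<xi> * a * b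
      + d_ss c \<xi> / 2 * b^2)"

text \<open>pi_{1,2} P_xi f: the S_1 + S_2 part of P_xi f, as coefficient vector.\<close>
definition piP :: "real \<times> real \<Rightarrow> real ^ 4 \<Rightarrow> real ^ 5" where
  "piP \<xi> c = (let a = fst \<xi>; b = snd \<xi> in
      vector [d_r c \<xi> - d_rr c \<xi> * a - d_rs c \<xi> * b,
              d_s c \<xi> - d_rs c \<xi> * a - d_ss c \<xi> * b,
              d_rr c \<xi> / 2, d_rs c \<xi>, d_ss c \<xi> / 2])"

lemma exhaust_5:
  fixes x :: 5
  shows "x = 1 \<or> x = 2 \<or> x = 3 \<or> x = 4 \<or> x = 5"
proof (induct x)
  case (of_int z)
  then have "z = 0 \<or> z = 1 \<or> z = 2 \<or> z = 3 \<or> z = 4" by fastforce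
  then show ?case by auto
qed

lemma UNIV_5: "UNIV = {1, 2, 3, 4, 5::5}"
  using exhaust_5 by auto

lemma vector_5:
 "(vector [x1,x2,x3,x4,x5] ::real^5)$1 = x1"
 "(vector [x1,x2,x3,x4,x5] ::real^5)$2 = x2"
 "(vector [x1,x2,x3,x4,x5] ::real^5)$3 = x3"
 "(vector [x1,x2,x3,x4,x5] ::real^5)$4 = x4"
 "(vector [x1,x2,x3,x4,x5] ::real^5)$5 = x5"
  unfolding vector_def by simp_all

lemma taylor2_decomp: "taylor2 \<xi> c y = taylor_const \<xi> c + eval12 (piP \<xi> c) y"
  by (cases \<xi>; cases y) (simp add: taylor2_def taylor_const_def piP_def eval12_def vector_5
      power2_eq_square field_simps)

lemma d_r_correct: "((\<lambda>r. cubic c (r, b)) has_real_derivative d_r c (a, b)) (at a)"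
  unfolding cubic_def d_r_def fst_conv snd_conv
  by (rule derivative_eq_intros refl)+ (simp add: algebra_simps power2_eq_square)

lemma d_s_correct: "((\<lambda>s. cubic c (a, s)) has_real_derivative d_s c (a, b)) (at b)"
  unfolding cubic_def d_s_def fst_conv snd_conv
  by (rule derivative_eq_intros refl)+ (simp add: algebra_simps power2_eq_square)

lemma d_rr_correct: "((\<lambda>r. d_r c (r, b)) has_real_derivative d_rr c (a, b)) (at a)"
  unfolding d_r_def d_rr_def fst_conv snd_conv
  by (rule derivative_eq_intros refl)+ (simp add: algebra_simps power2_eq_square)

lemma d_rs_correct: "((\<lambda>s. d_r c (a, s)) has_real_derivative d_rs c (a, b)) (at b)"
  unfolding d_r_def d_rs_def fst_conv snd_conv
  by (rule derivative_eq_intros refl)+ (simp add: algebra_simps power2_eq_square)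

lemma d_ss_correct: "((\<lambda>s. d_s c (a, s)) has_real_derivative d_ss c (a, b)) (at b)"
  unfolding d_s_def d_ss_def fst_conv snd_conv
  by (rule derivative_eq_intros refl)+ (simp add: algebra_simps power2_eq_square)

end

theory Submission
  imports Defs
begin

lemma vec5_eq: "(x::real^5) = y \<longleftrightarrow> x$1 = y$1 \<and> x$2 = y$2 \<and> x$3 = y$3 \<and> x$4 = y$4 \<and> x$5 = y$5"
proof
  assume h: "x$1 = y$1 \<and> x$2 = y$2 \<and> x$3 = y$3 \<and> x$4 = y$4 \<and> x$5 = y$5"
  show "x = y"
  unfolding vec_eq_iff proof
    fix i :: 5
    from exhaust_5[of i] h show "x$i = y$i" by auto
  qed
qed simp
lemma vector_4:
 "(vector [x1,x2,x3,x4] ::real^4)$1 = x1"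
 "(vector [x1,x2,x3,x4] ::real^4)$2 = x2"
 "(vector [x1,x2,x3,x4] ::real^4)$3 = x3"
 "(vector [x1,x2,x3,x4] ::real^4)$4 = x4"
  unfolding vector_def by simp_all
lemma hyper_null:
  fixes u :: "real \<times> real"
  assumes "u \<noteq> 0"
  shows "{x. u \<bullet> x = c} \<in> null_sets lborel"
proof -
  have "negligible {x. u \<bullet> x = c}" using negligible_hyperplane assms by blast
  moreover have "{x. u \<bullet> x = c} \<in> sets lborel"
    by (simp add: borel_closed closed_hyperplane)
  ultimately show ?thesis
    by (auto simp: null_sets_completion_iff negligible_iff_null_sets)
qed

lemma dim_pt:
  fixes f :: "real ^ 5"
  assumes nz: "\<xi> \<noteq> 0"
  and nf: "f$1 + fst \<xi> * f$3 + snd \<xi> * f$4 / 2 \<noteq> 0 \<or> f$2 + fst \<xi> * f$4 / 2 + snd \<xi> * f$5 \<noteq> 0"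
  shows "dim (span ((piP \<xi>) ` UNIV \<union> {f})) = 4"
proof -
  obtain a b where xi: "\<xi> = (a, b)" by fastforce
  define v3 :: "real^5" where "v3 = vector [-a, 0, 1, 0, 0]"
  define v4 :: "real^5" where "v4 = vector [-b/2, -a/2, 0, 1, 0]"
  define v5 :: "real^5" where "v5 = vector [0, -b, 0, 0, 1]"
  have sub: "range (piP \<xi>) \<subseteq> span {v3, v4, v5}"
  proof
    fix q assume "q \<in> range (piP \<xi>)"
    then obtain c where q: "q = piP \<xi> c" by auto
    have "q = (d_rr c \<xi> / 2) *\<^sub>R v3 + d_rs c \<xi> *\<^sub>R v4 + (d_ss c \<xi> / 2) *\<^sub>R v5"
      unfolding q vec5_eq by (simp add: xi piP_def v3_def v4_def v5_def vector_5 d_r_def d_s_def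
          d_rr_def d_rs_def d_ss_def algebra_simps power2_eq_square)
    then show "q \<in> span {v3, v4, v5}"
      by (simp add: span_add span_base span_scale)
  qed
  have sup: "{v3, v4, v5} \<subseteq> range (piP \<xi>)"
  proof (cases "a = 0")
    case False
    have "v3 = piP \<xi> (vector [1/(3*a), 0, 0, 0])"
      unfolding vec5_eq using False by (simp add: xi piP_def v3_def vector_4 vector_5 d_r_def d_s_def
          d_rr_def d_rs_def d_ss_def field_simps power2_eq_square)
    moreover have "v4 = piP \<xi> (vector [-b/(6*a^2), 1/(2*a), 0, 0])"
      unfolding vec5_eq using False by (simp add: xi piP_def v4_def vector_4 vector_5 d_r_def d_s_def
          d_rr_def d_rs_def d_ss_def field_simps power2_eq_square)
    moreover have "v5 = piP \<xi> (vector [b^2/(3*a^3), -b/a^2, 1/a, 0])"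
      unfolding vec5_eq using False by (simp add: xi piP_def v5_def vector_4 vector_5 d_r_def d_s_def
          d_rr_def d_rs_def d_ss_def field_simps power2_eq_square power3_eq_cube)
    ultimately show ?thesis by auto
  next
    case True
    then have bn: "b \<noteq> 0" using nz xi by (auto simp: zero_prod_def)
    have "v5 = piP \<xi> (vector [0, 0, 0, 1/(3*b)])"
      unfolding vec5_eq using bn True by (simp add: xi piP_def v5_def vector_4 vector_5 d_r_def d_s_def
          d_rr_def d_rs_def d_ss_def field_simps power2_eq_square)
    moreover have "v4 = piP \<xi> (vector [0, 0, 1/(2*b), -a/(6*b^2)])"
      unfolding vec5_eq using bn True by (simp add: xi piP_def v4_def vector_4 vector_5 d_r_def d_s_def
          d_rr_def d_rs_def d_ss_def field_simps power2_eq_square)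
    moreover have "v3 = piP \<xi> (vector [0, 1/b, -a/b^2, a^2/(3*b^3)])"
      unfolding vec5_eq using bn True by (simp add: xi piP_def v3_def vector_4 vector_5 d_r_def d_s_def
          d_rr_def d_rs_def d_ss_def field_simps power2_eq_square power3_eq_cube)
    ultimately show ?thesis by auto
  qed
  have spaneq: "span ((piP \<xi>) ` UNIV \<union> {f}) = span (insert f {v3, v4, v5})"
    unfolding span_eq
  proof
    show "range (piP \<xi>) \<union> {f} \<subseteq> span (insert f {v3, v4, v5})"
    proof -
      have "span {v3, v4, v5} \<subseteq> span (insert f {v3, v4, v5})" by (rule span_mono) auto
      then show ?thesis using sub by (auto intro: span_base)
    qed
    show "insert f {v3, v4, v5} \<subseteq> span (range (piP \<xi>) \<union> {f})"
      using sup by (auto intro: span_base)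
  qed
  have d5: "dim {v5} = 1"
    by (subst dim_insert) (auto simp: v5_def vec5_eq vector_5)
  have d45: "dim {v4, v5} = 2"
    apply (subst dim_insert)
    using d5 by (auto simp: span_singleton v4_def v5_def vec5_eq vector_5)
  have d345: "dim {v3, v4, v5} = 3"
    apply (subst dim_insert)
    using d45 by (auto simp: span_breakdown_eq span_singleton v3_def v4_def v5_def vec5_eq vector_5)
  have "f \<notin> span {v3, v4, v5}"
  proof
    assume "f \<in> span {v3, v4, v5}"
    then obtain x y z where "f - x *\<^sub>R v3 - y *\<^sub>R v4 - z *\<^sub>R v5 = 0"
      by (auto simp: span_breakdown_eq span_singleton)
    then show False using nf
      by (auto simp: xi v3_def v4_def v5_def vec5_eq vector_5 algebra_simps)
  qed
  then show ?thesis
    unfolding spaneq dim_span dim_insert[of f] using d345 by simp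
qed


theorem lemma7p3:
  fixes f :: "real ^ 5"
  assumes "f \<noteq> 0"
  shows "AE \<xi> in lborel. dim (span ((piP \<xi>) ` UNIV \<union> {f})) = 4"
proof -
  define N :: "(real \<times> real) set" where
    "N = {\<xi>. f$1 + fst \<xi> * f$3 + snd \<xi> * f$4 / 2 = 0 \<and> f$2 + fst \<xi> * f$4 / 2 + snd \<xi> * f$5 = 0}"
  have Nnull: "\<exists>H. H \<in> null_sets lborel \<and> N \<subseteq> H"
  proof (cases "(f$3, f$4/2) \<noteq> (0::real \<times> real)")
    case True
    have "N \<subseteq> {x. (f$3, f$4/2) \<bullet> x = - f$1}"
      by (auto simp: N_def inner_prod_def algebra_simps)
    then show ?thesis using hyper_null[OF True] by blast
  next
    case F1: False
    show ?thesis
    proof (cases "(f$4/2, f$5) \<noteq> (0::real \<times> real)")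
      case True
      have "N \<subseteq> {x. (f$4/2, f$5) \<bullet> x = - f$2}"
        by (auto simp: N_def inner_prod_def algebra_simps)
      then show ?thesis using hyper_null[OF True] by blast
    next
      case False
      then have "N = {}" using F1 assms by (auto simp: N_def vec5_eq zero_prod_def)
      then show ?thesis by auto
    qed
  qed
  then obtain H where H: "H \<in> null_sets lborel" "N \<subseteq> H" by blast
  show ?thesis
  proof (rule AE_I'[of "H \<union> {0}"])
    show "H \<union> {0} \<in> null_sets lborel"
      using null_sets.Un[OF H(1) finite_imp_null_set_lborel[of "{0}"]] by simp
    show "{x \<in> space lborel. dim (span (range (piP x) \<union> {f})) \<noteq> 4} \<subseteq> H \<union> {0}"
      using dim_pt H(2) unfolding N_def by blast
  qed
qed

end
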